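(* Let $T$ be a tournament and $X=(v_1,\dots,v_k)$, $k\ge2$, a list of vertices satisfying the $U$-property. Then $v_k$ has exactly one in-neighbour $w$ in $V(T)\setminus X$; let $X'=(v_1,\dots,v_k,w)$. (i) If $d^-(w)=d^-(v_k)$, then $T[X']$ is a $U$-tournament and $X'$ dominates $T$. (ii) If $d^-(w)=d^-(v_k)+1$, then $X'$ is contained in a set $Y\subseteq V(T)$ such that $T[Y]$ is a $U$-tournament and $Y$ dominates or quasi-dominates $T$. (iii) If $d^-(w)>d^-(v_k)+1$, then $T[X]$ is a $U$-tournament and $X$ $(w,v_k)$-quasi-dominates $T$. In every case, $X$ is contained in a set $Y$ such that $T[Y]$ is a $U$-tournament and $Y$ dominates or quasi-dominates $T$.
   Context: A tournament is a digraph with exactly one arc between each pair of distinct vertices; $d^-(v)$ is the in-degree of $v$ in $T$. A list $(v_1,\dots,v_k)$, $k\ge2$, satisfies the $U$-property if $d^-(v_1)=1$ and for each $i\in\{2,\dots,k\}$, $(v_i,v_{i-1})\in A(T)$ and $d^-(v_i)=i-1$. $U_m$ is the tournament on $\{x_1,\dots,x_m\}$ with arcs $(x_{i+1},x_i)$ for $i\in[m-1]$ and $(x_i,x_j)$ for $1\le i<m$, $i+1<j\le m$; a $U$-tournament is a tournament isomorphic to some $U_m$. A set $Y$ dominates $T$ if $(y,z)\in A(T)$ for all $y\in Y$, $z\in V(T)\setminus Y$. $Y$ $(b,a)$-quasi-dominates $T$ if: $(b,a)\in A(T)$ with $a\in Y$, $b\notin Y$; $(u,v)\in A(T)$ for every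 $(u,v)\in (Y\times(V(T)\setminus Y))\setminus\{(a,b)\}$; $d^-(b)\ge|Y|+1$; and $a$ has an out-neighbour in $Y$. $Y$ quasi-dominates $T$ if it $(b,a)$-quasi-dominates $T$ for some $a,b$. *)

theory Defs
  imports Main
begin

definition tournament :: "'a set \<Rightarrow> ('a \<times> 'a) set \<Rightarrow> bool" where
  "tournament V A \<longleftrightarrow> finite V \<and> A \<subseteq> V \<times> V \<and>
     (\<forall>v\<in>V. (v, v) \<notin> A) \<and>
     (\<forall>u\<in>V. \<forall>v\<in>V. u \<noteq> v \<longrightarrow> ((u, v) \<in> A \<longleftrightarrow> (v, u) \<notin> A))"

definition indeg :: "'a set \<Rightarrow> ('a \<times> 'a) set \<Rightarrow> 'a \<Rightarrow> nat" where
  "indeg V A v = card {u \<in> V. (u, v) \<in> A}"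

text \<open>U-property; the list is 0-indexed, so v_i = xs ! (i - 1).\<close>
definition U_property :: "'a set \<Rightarrow> ('a \<times> 'a) set \<Rightarrow> 'a list \<Rightarrow> bool" where
  "U_property V A xs \<longleftrightarrow> length xs \<ge> 2 \<and> set xs \<subseteq> V \<and>
     indeg V A (xs ! 0) = 1 \<and>
     (\<forall>j. 1 \<le> j \<and> j < length xs \<longrightarrow>
          (xs ! j, xs ! (j - 1)) \<in> A \<and> indeg V A (xs ! j) = j)"

definition U_arcs :: "nat \<Rightarrow> (nat \<times> nat) set" where
  "U_arcs m = {(i + 1, i) | i. 1 \<le> i \<and> i < m} \<union>
              {(i, j) | i j. 1 \<le> i \<and> i < m \<and> i + 1 < j \<and> j \<le> m}"

definition is_U_tournament :: "'a set \<Rightarrow> ('a \<times> 'a) set \<Rightarrow> bool" where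
  "is_U_tournament Y A \<longleftrightarrow> (\<exists>m f. bij_betw f Y {1..m} \<and>
     (\<forall>u\<in>Y. \<forall>v\<in>Y. (u, v) \<in> A \<longleftrightarrow> (f u, f v) \<in> U_arcs m))"

definition dominates :: "'a set \<Rightarrow> ('a \<times> 'a) set \<Rightarrow> 'a set \<Rightarrow> bool" where
  "dominates V A Y \<longleftrightarrow> (\<forall>y\<in>Y. \<forall>z\<in>V - Y. (y, z) \<in> A)"

definition quasi_dominates_by :: "'a set \<Rightarrow> ('a \<times> 'a) set \<Rightarrow> 'a set \<Rightarrow> 'a \<Rightarrow> 'a \<Rightarrow> bool" where
  "quasi_dominates_by V A Y b a \<longleftrightarrow>
     (b, a) \<in> A \<and> a \<in> Y \<and> b \<in> V \<and> b \<notin> Y \<and>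
     (\<forall>(u, v) \<in> (Y \<times> (V - Y)) - {(a, b)}. (u, v) \<in> A) \<and>
     indeg V A b \<ge> card Y + 1 \<and>
     (\<exists>y\<in>Y. (a, y) \<in> A)"

definition quasi_dominates :: "'a set \<Rightarrow> ('a \<times> 'a) set \<Rightarrow> 'a set \<Rightarrow> bool" where
  "quasi_dominates V A Y \<longleftrightarrow> (\<exists>a b. quasi_dominates_by V A Y b a)"

end

theory Submission
  imports Defs
begin

lemma tour_basic:
  assumes "tournament V A"
  shows "finite V" "(u,v)\<in>A \<Longrightarrow> u\<in>V" "(u,v)\<in>A \<Longrightarrow> v\<in>V" "(v,v)\<notin>A"
    "(u,v)\<in>A \<Longrightarrow> (v,u)\<notin>A"
    "u\<in>V \<Longrightarrow> v\<in>V \<Longrightarrow> u\<noteq>v \<Longrightarrow> (u,v)\<notin>A \<Longrightarrow> (v,u)\<in>A"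
proof -
  have all: "finite V \<and> A \<subseteq> V \<times> V \<and> (\<forall>v\<in>V. (v, v) \<notin> A) \<and>
     (\<forall>u\<in>V. \<forall>v\<in>V. u \<noteq> v \<longrightarrow> ((u, v) \<in> A \<longleftrightarrow> (v, u) \<notin> A))"
    using assms unfolding tournament_def .
  have f: "finite V" using all by (elim conjE)
  have s: "A \<subseteq> V \<times> V" using all by (elim conjE)
  have irr: "\<forall>v\<in>V. (v, v) \<notin> A" using all by (elim conjE)
  have tot: "\<And>u v. u\<in>V \<Longrightarrow> v\<in>V \<Longrightarrow> u \<noteq> v \<Longrightarrow> ((u, v) \<in> A \<longleftrightarrow> (v, u) \<notin> A)"
    using all by (elim conjE) (rule all[THEN conjunct2, THEN conjunct2, THEN conjunct2, rule_format])
  show "finite V" by (rule f)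
  show "(u,v)\<in>A \<Longrightarrow> u\<in>V" using subsetD[OF s, of "(u,v)"] by simp
  show "(u,v)\<in>A \<Longrightarrow> v\<in>V" using subsetD[OF s, of "(u,v)"] by simp
  show "(v,v)\<notin>A"
  proof
    assume "(v,v)\<in>A"
    then have "v \<in> V" using subsetD[OF s, of "(v,v)"] by simp
    then show False using irr \<open>(v,v)\<in>A\<close> by simp
  qed
  show "(u,v)\<in>A \<Longrightarrow> (v,u)\<notin>A"
  proof -
    assume a: "(u,v)\<in>A"
    then have uv: "u \<in> V" "v \<in> V" using subsetD[OF s, of "(u,v)"] by simp_all
    have "u \<noteq> v"
    proof
      assume "u = v"
      then have "(v,v) \<in> A" using a by simp
      moreover have "(v,v) \<notin> A" using irr uv(2) by (rule bspec)
      ultimately show False by contradiction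
    qed
    then have "(u, v) \<in> A \<longleftrightarrow> (v, u) \<notin> A" by (rule tot[OF uv(1) uv(2)])
    then show ?thesis using a by simp
  qed
  show "u\<in>V \<Longrightarrow> v\<in>V \<Longrightarrow> u\<noteq>v \<Longrightarrow> (u,v)\<notin>A \<Longrightarrow> (v,u)\<in>A"
  proof -
    assume "u\<in>V" "v\<in>V" "u\<noteq>v" "(u,v)\<notin>A"
    moreover have "(v, u) \<in> A \<longleftrightarrow> (u, v) \<notin> A" using tot[OF \<open>v\<in>V\<close> \<open>u\<in>V\<close>] \<open>u\<noteq>v\<close> by metis
    ultimately show ?thesis by simp
  qed
qed

lemma U_facts:
  assumes "U_property V A xs"
  shows "length xs \<ge> 2" "set xs \<subseteq> V" "indeg V A (xs ! 0) = 1"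
    "\<And>j. 1 \<le> j \<Longrightarrow> j < length xs \<Longrightarrow> (xs ! j, xs ! (j - 1)) \<in> A"
    "\<And>j. 1 \<le> j \<Longrightarrow> j < length xs \<Longrightarrow> indeg V A (xs ! j) = j"
  using assms unfolding U_property_def by blast+
definition Urel :: "('a \<times> 'a) set \<Rightarrow> 'a list \<Rightarrow> bool" where
  "Urel A ys \<longleftrightarrow> (\<forall>i<length ys. \<forall>j<length ys. (ys!j, ys!i)\<in>A \<longleftrightarrow> (j+1<i \<or> j=i+1))"

lemma U_arcs_iff: "1\<le>a \<Longrightarrow> a\<le>m \<Longrightarrow> 1\<le>b \<Longrightarrow> b\<le>m \<Longrightarrow> (a,b)\<in>U_arcs m \<longleftrightarrow> (a+1<b \<or> a=b+1)"
  unfolding U_arcs_def by auto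

lemma Urel_U:
  assumes "Urel A ys" "distinct ys"
  shows "is_U_tournament (set ys) A"
proof -
  let ?m = "length ys"
  define g where "g = (\<lambda>i. ys!(i-1))"
  have inj: "inj_on g {1..?m}"
    unfolding inj_on_def g_def using assms(2) by (auto simp: nth_eq_iff_index_eq)
  have img: "g ` {1..?m} = set ys"
  proof
    show "g ` {1..?m} \<subseteq> set ys" unfolding g_def by auto
    show "set ys \<subseteq> g ` {1..?m}"
    proof
      fix v assume "v \<in> set ys"
      then obtain k where "k < ?m" "v = ys!k" by (auto simp: in_set_conv_nth)
      then have "v = g (k+1)" "k+1 \<in> {1..?m}" unfolding g_def by auto
      then show "v \<in> g ` {1..?m}" by blast
    qed
  qed
  have bij: "bij_betw g {1..?m} (set ys)" using inj img by (simp add: bij_betw_def)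
  define f where "f = inv_into {1..?m} g"
  have bf: "bij_betw f (set ys) {1..?m}" unfolding f_def by (rule bij_betw_inv_into[OF bij])
  have key: "(u,v)\<in>A \<longleftrightarrow> (f u, f v)\<in>U_arcs ?m" if "u\<in>set ys" "v\<in>set ys" for u v
  proof -
    have "u \<in> g ` {1..?m}" "v \<in> g ` {1..?m}" using that img by simp_all
    then obtain a b where a: "a\<in>{1..?m}" "u = g a" and b: "b\<in>{1..?m}" "v = g b" by (meson imageE)
    have fa: "f u = a" unfolding f_def using a inj by (simp add: inv_into_f_f)
    have fb: "f v = b" unfolding f_def using b inj by (simp add: inv_into_f_f)
    have "(u,v)\<in>A \<longleftrightarrow> (ys!(a-1), ys!(b-1))\<in>A" using a b g_def by simp
    also have "\<dots> \<longleftrightarrow> (a-1+1 < b-1 \<or> a-1 = b-1+1)"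
    proof -
      have bm: "b-1 < ?m" and am: "a-1 < ?m" using a b by auto
      have H: "\<And>i j. i<?m \<Longrightarrow> j<?m \<Longrightarrow> ((ys!j, ys!i)\<in>A \<longleftrightarrow> (j+1<i \<or> j=i+1))"
        using assms(1) unfolding Urel_def by blast
      show ?thesis by (rule H[OF bm am])
    qed
    also have "\<dots> \<longleftrightarrow> (a+1<b \<or> a=b+1)" using a b by auto
    also have "\<dots> \<longleftrightarrow> (a,b)\<in>U_arcs ?m" using U_arcs_iff[of a ?m b] a b by simp
    finally show ?thesis using fa fb by simp
  qed
  show ?thesis unfolding is_U_tournament_def
    by (rule exI[of _ ?m], rule exI[of _ f]) (use bf key in blast)
qed

lemma U_distinct:
  assumes T: "tournament V A" and U: "U_property V A xs"
  shows "distinct xs"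
proof -
  have "xs!i \<noteq> xs!j" if "i<j" "j<length xs" for i j
  proof
    assume eq: "xs!i = xs!j"
    have j1: "1 \<le> j" using that(1) by simp
    have ij: "indeg V A (xs!j) = j" by (rule U_facts(5)[OF U j1 that(2)])
    show False
    proof (cases "i=0")
      case True
      have e0: "xs!0 = xs!j" using eq True by simp
      have "indeg V A (xs!0) = 1" by (rule U_facts(3)[OF U])
      then have jj: "j = 1" using ij e0 by simp
      have l1: "1 < length xs" using that(2) jj by simp
      have "(xs!1, xs!(1-1))\<in>A" by (rule U_facts(4)[OF U _ l1]) simp
      then have "(xs!1, xs!0)\<in>A" by simp
      then show False using e0 jj tour_basic(4)[OF T] by metis
    next
      case False
      then have i1: "1 \<le> i" by simp
      have ii: "indeg V A (xs!i) = i" by (rule U_facts(5)[OF U i1]) (use that in simp)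
      then show False using eq ij that(1) by simp
    qed
  qed
  note H = this
  show ?thesis unfolding distinct_conv_nth
  proof (intro allI impI)
    fix i j assume ij: "i < length xs" "j < length xs" "i \<noteq> j"
    show "xs!i \<noteq> xs!j"
    proof (cases "i < j")
      case True then show ?thesis using H ij by blast
    next
      case False then have "j < i" using ij by simp
      then show ?thesis using H[of j i] ij by auto
    qed
  qed
qed
lemma U_struct:
  assumes T: "tournament V A" and U: "U_property V A xs"
  shows "i < length xs \<Longrightarrow> (\<forall>j<length xs. (xs!j, xs!i)\<in>A \<longleftrightarrow> (j+1<i \<or> j=i+1)) \<and>
     (i+1 < length xs \<longrightarrow> (\<forall>u\<in>V - set xs. (u, xs!i)\<notin>A))"
proof (induction i rule: less_induct)
  case (less i)
  let ?n = "length xs"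
  have D: "distinct xs" using U_distinct[OF T U] .
  have XV: "set xs \<subseteq> V" using U_facts(2)[OF U] .
  have lower: "(xs!j, xs!i)\<in>A" if "j+1<i" for j
  proof -
    have ji: "j < i" "j<?n" using that less.prems by auto
    from less.IH[OF ji] have "(xs!i, xs!j)\<notin>A" using less.prems that by auto
    moreover have "xs!i \<noteq> xs!j" using D ji less.prems by (auto simp: nth_eq_iff_index_eq)
    moreover have "xs!i\<in>V" "xs!j\<in>V" using XV less.prems ji by auto
    ultimately show ?thesis using tour_basic(6)[OF T] by blast
  qed
  have upper: "(xs!(i+1), xs!i)\<in>A" if "i+1<?n"
    using U_facts(4)[OF U, of "i+1"] that by simp
  show ?case
  proof (cases "i+1 < ?n")
    case True
    define K where "K = (\<lambda>j. xs!j) ` {j. j<?n \<and> (j+1<i \<or> j=i+1)}"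
    define S where "S = {u\<in>V. (u, xs!i)\<in>A}"
    have KS: "K \<subseteq> S"
    proof
      fix u assume "u \<in> K"
      then obtain j where j: "j<?n" "j+1<i \<or> j=i+1" "u = xs!j" unfolding K_def by blast
      then have "u \<in> V" using XV by auto
      moreover have "(u, xs!i)\<in>A" using j lower upper by auto
      ultimately show "u \<in> S" unfolding S_def by blast
    qed
    have Jset: "{j. j<?n \<and> (j+1<i \<or> j=i+1)} = insert (i+1) {..<i-1}" using True less.prems by auto
    have cK: "card K = i - 1 + 1"
    proof -
      have "card K = card {j. j<?n \<and> (j+1<i \<or> j=i+1)}" unfolding K_def
        by (rule card_image) (use D in \<open>auto simp: inj_on_def nth_eq_iff_index_eq\<close>)
      also have "\<dots> = i - 1 + 1" unfolding Jset by simp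
      finally show ?thesis .
    qed
    have cS: "card S = i - 1 + 1"
    proof (cases "i = 0")
      case True
      then show ?thesis using U_facts(3)[OF U] unfolding S_def indeg_def by simp
    next
      case False
      then show ?thesis using U_facts(5)[OF U, of i] less.prems unfolding S_def indeg_def by simp
    qed
    have fS: "finite S" using tour_basic(1)[OF T] unfolding S_def by auto
    have KeqS: "K = S" using card_subset_eq[OF fS KS] cK cS by simp
    show ?thesis
    proof (intro conjI allI impI ballI)
      fix j assume j: "j<?n"
      have "(xs!j, xs!i)\<in>A \<longleftrightarrow> xs!j \<in> S" using XV j unfolding S_def by auto
      also have "\<dots> \<longleftrightarrow> xs!j \<in> K" using KeqS by simp
      also have "\<dots> \<longleftrightarrow> (j+1<i \<or> j=i+1)" unfolding K_def using D j
        by (auto simp: nth_eq_iff_index_eq)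
      finally show "(xs!j, xs!i)\<in>A \<longleftrightarrow> (j+1<i \<or> j=i+1)" .
    next
      fix u assume u: "u \<in> V - set xs"
      then have "u \<notin> K" unfolding K_def by auto
      then show "(u, xs!i)\<notin>A" using KeqS u unfolding S_def by auto
    qed
  next
    case False
    then have iN: "i = ?n - 1" using less.prems by auto
    have i1: "i \<ge> 1" using U_facts(1)[OF U] iN by auto
    have bk: "(xs!i, xs!(i-1))\<in>A" using U_facts(4)[OF U, of i] i1 less.prems by simp
    show ?thesis
    proof (intro conjI allI impI)
      fix j assume j: "j<?n"
      show "(xs!j, xs!i)\<in>A \<longleftrightarrow> (j+1<i \<or> j=i+1)"
      proof (cases "j+1<i")
        case True then show ?thesis using lower by auto
      next
        case F2: False
        then have "j = i \<or> j = i-1" using j iN by auto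
        then have "(xs!j, xs!i)\<notin>A"
        proof
          assume "j = i" then show ?thesis using tour_basic(4)[OF T] by simp
        next
          assume "j = i-1" then show ?thesis using tour_basic(5)[OF T bk] by simp
        qed
        then show ?thesis using F2 j iN by auto
      qed
    qed (use False in auto)
  qed
qed

lemma U_Urel:
  assumes T: "tournament V A" and U: "U_property V A xs"
  shows "Urel A xs"
  unfolding Urel_def
proof (intro allI impI)
  fix i j assume "i < length xs" "j < length xs"
  then show "(xs!j, xs!i)\<in>A \<longleftrightarrow> (j+1<i \<or> j=i+1)"
    using conjunct1[OF U_struct[OF T U \<open>i < length xs\<close>]] by blast
qed

lemma U_w_exists:
  assumes T: "tournament V A" and U: "U_property V A xs"
  obtains w where "{u\<in>V - set xs. (u, last xs)\<in>A} = {w}"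
proof -
  let ?n = "length xs"
  have n2: "?n \<ge> 2" using U_facts(1)[OF U] .
  have XV: "set xs \<subseteq> V" using U_facts(2)[OF U] .
  have D: "distinct xs" using U_distinct[OF T U] .
  have lst: "last xs = xs!(?n-1)" proof -
    have "xs \<noteq> []" using n2 by auto
    then show ?thesis by (simp add: last_conv_nth)
  qed
  define S where "S = {u\<in>V. (u, xs!(?n-1))\<in>A}"
  define K where "K = (\<lambda>j. xs!j) ` {..<?n-2}"
  have st: "\<And>j. j < ?n \<Longrightarrow> (xs!j, xs!(?n-1))\<in>A \<longleftrightarrow> j+1 < ?n-1"
    using U_struct[OF T U, of "?n-1"] n2 by auto
  have SK: "S \<inter> set xs = K"
  proof
    show "S \<inter> set xs \<subseteq> K"
    proof
      fix u assume "u \<in> S \<inter> set xs"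
      then obtain j where "j<?n" "u = xs!j" "(u, xs!(?n-1))\<in>A" unfolding S_def by (auto simp: in_set_conv_nth)
      then show "u \<in> K" using st unfolding K_def by auto
    qed
    show "K \<subseteq> S \<inter> set xs"
      unfolding K_def S_def using st XV by auto
  qed
  have cK: "card K = ?n - 2" unfolding K_def
    by (subst card_image) (use D in \<open>auto simp: inj_on_def nth_eq_iff_index_eq\<close>)
  have cS: "card S = ?n - 1" using U_facts(5)[OF U, of "?n-1"] n2 unfolding S_def indeg_def by simp
  have fS: "finite S" using tour_basic(1)[OF T] unfolding S_def by auto
  have "card (S - set xs) = card (S - K)" proof -
    have "S - set xs = S - K" using SK by blast
    then show ?thesis by simp
  qed
  also have "\<dots> = card S - card K" using SK fS by (intro card_Diff_subset) (auto intro: finite_subset)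
  also have "\<dots> = 1" using cS cK n2 by simp
  finally obtain w where "S - set xs = {w}" using card_1_singletonE by blast
  moreover have "S - set xs = {u\<in>V - set xs. (u, last xs)\<in>A}" unfolding S_def lst by auto
  ultimately show ?thesis using that by simp
qed


lemma W_facts:
  assumes T: "tournament V A" and U: "U_property V A xs"
    and W: "{u\<in>V - set xs. (u, last xs)\<in>A} = {w}"
  shows "w\<in>V" "w\<notin>set xs" "(w, last xs)\<in>A"
    "\<And>i u. i<length xs \<Longrightarrow> u\<in>V - set xs \<Longrightarrow> u\<noteq>w \<Longrightarrow> (xs!i,u)\<in>A"
    "\<And>i. i+1<length xs \<Longrightarrow> (xs!i, w)\<in>A"
    "{u\<in>V. (u,w)\<in>A} \<inter> set xs = (\<lambda>j. xs!j) ` {..<length xs - 1}"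
    "card ((\<lambda>j. xs!j) ` {..<length xs - 1}) = length xs - 1"
    "indeg V A (last xs) = length xs - 1"
    "last xs = xs ! (length xs - 1)"
proof -
  let ?n = "length xs"
  have n2: "?n \<ge> 2" using U_facts(1)[OF U] .
  have XV: "set xs \<subseteq> V" using U_facts(2)[OF U] .
  have D: "distinct xs" using U_distinct[OF T U] .
  have "w \<in> {u\<in>V - set xs. (u, last xs)\<in>A}" using W by simp
  then show wV: "w\<in>V" and wX: "w\<notin>set xs" and wl: "(w, last xs)\<in>A" by simp_all
  have ne: "xs \<noteq> []" using n2 by auto
  show lst: "last xs = xs ! (?n - 1)" using ne by (simp add: last_conv_nth)
  show dom: "(xs!i,u)\<in>A" if i: "i<?n" and u: "u\<in>V - set xs" and uw: "u\<noteq>w" for i u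
  proof -
    have "(u, xs!i) \<notin> A"
    proof (cases "i+1 < ?n")
      case True
      then show ?thesis using conjunct2[OF U_struct[OF T U i]] u by blast
    next
      case False
      then have "i = ?n - 1" using i by simp
      then have "xs!i = last xs" using lst by simp
      moreover have "u \<notin> {u\<in>V - set xs. (u, last xs)\<in>A}" using W uw by simp
      ultimately show ?thesis using u by simp
    qed
    moreover have "xs!i \<in> V" using XV i by auto
    moreover have "u \<noteq> xs!i" using u i by auto
    ultimately show ?thesis using tour_basic(6)[OF T] u by blast
  qed
  show dw: "(xs!i, w)\<in>A" if i: "i+1<?n" for i
  proof -
    have "(w, xs!i) \<notin> A" using conjunct2[OF U_struct[OF T U, of i]] i wV wX by auto
    moreover have "xs!i \<in> V" using XV i by auto
    moreover have "w \<noteq> xs!i" using wX i by auto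
    ultimately show ?thesis using tour_basic(6)[OF T] wV by blast
  qed
  show "{u\<in>V. (u,w)\<in>A} \<inter> set xs = (\<lambda>j. xs!j) ` {..<?n - 1}"
  proof
    show "{u\<in>V. (u,w)\<in>A} \<inter> set xs \<subseteq> (\<lambda>j. xs!j) ` {..<?n - 1}"
    proof
      fix u assume u: "u \<in> {u\<in>V. (u,w)\<in>A} \<inter> set xs"
      then obtain j where j: "j < ?n" "u = xs!j" by (auto simp: in_set_conv_nth)
      have "j \<noteq> ?n - 1"
      proof
        assume "j = ?n - 1"
        then have "u = last xs" using j lst by simp
        then have "(last xs, w) \<in> A" using u by simp
        then show False using tour_basic(5)[OF T wl] by simp
      qed
      then show "u \<in> (\<lambda>j. xs!j) ` {..<?n - 1}" using j by auto
    qed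
    show "(\<lambda>j. xs!j) ` {..<?n - 1} \<subseteq> {u\<in>V. (u,w)\<in>A} \<inter> set xs"
    proof
      fix u assume "u \<in> (\<lambda>j. xs!j) ` {..<?n - 1}"
      then obtain j where j: "j < ?n - 1" "u = xs!j" by auto
      then have "(u, w)\<in>A" using dw by simp
      moreover have "u \<in> set xs" using j by auto
      ultimately show "u \<in> {u\<in>V. (u,w)\<in>A} \<inter> set xs" using XV by auto
    qed
  qed
  show "card ((\<lambda>j. xs!j) ` {..<?n - 1}) = ?n - 1"
    by (subst card_image) (use D in \<open>auto simp: inj_on_def nth_eq_iff_index_eq\<close>)
  show "indeg V A (last xs) = ?n - 1"
    using U_facts(5)[OF U, of "?n-1"] n2 lst by simp
qed

lemma case_one:
  assumes T: "tournament V A" and U: "U_property V A xs"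
    and W: "{u\<in>V - set xs. (u, last xs)\<in>A} = {w}"
    and I: "indeg V A w = indeg V A (last xs)"
  shows "is_U_tournament (set (xs @ [w])) A \<and> dominates V A (set (xs @ [w]))"
proof -
  let ?n = "length xs"
  note F = W_facts[OF T U W]
  have n2: "?n \<ge> 2" using U_facts(1)[OF U] .
  have D: "distinct xs" using U_distinct[OF T U] .
  have fV: "finite V" using tour_basic(1)[OF T] .
  define Sw where "Sw = {u\<in>V. (u,w)\<in>A}"
  define K where "K = (\<lambda>j. xs!j) ` {..<?n - 1}"
  have KS: "K \<subseteq> Sw" using F(6) unfolding K_def Sw_def by blast
  have cS: "card Sw = ?n - 1" using I F(8) unfolding Sw_def indeg_def by simp
  have "K = Sw" using card_subset_eq[of Sw K] KS cS F(7) fV unfolding K_def Sw_def by simp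
  then have SwX: "Sw \<subseteq> set xs" using F(6) unfolding K_def by blast
  have wdom: "(w, u)\<in>A" if u: "u \<in> V - set xs" "u \<noteq> w" for u
  proof -
    have "(u, w) \<notin> A" using SwX u unfolding Sw_def by auto
    then show ?thesis using tour_basic(6)[OF T] u F(1) by blast
  qed
  have R: "Urel A xs" using U_Urel[OF T U] .
  have Rw: "Urel A (xs @ [w])"
    unfolding Urel_def
  proof (intro allI impI)
    fix i j assume i: "i < length (xs@[w])" and j: "j < length (xs@[w])"
    consider "i<?n" "j<?n" | "i<?n" "j=?n" | "i=?n" "j<?n" | "i=?n" "j=?n" using i j by fastforce
    then show "((xs@[w])!j, (xs@[w])!i)\<in>A \<longleftrightarrow> (j+1<i \<or> j=i+1)"
    proof cases
      case 1 then show ?thesis using R unfolding Urel_def by (simp add: nth_append)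
    next
      case 2
      show ?thesis
      proof (cases "i+1 < ?n")
        case True
        then have "(w, xs!i) \<notin> A" using tour_basic(5)[OF T F(5)[OF True]] by simp
        then show ?thesis using 2 True by (simp add: nth_append)
      next
        case False
        then have "i = ?n - 1" using 2 by simp
        then show ?thesis using 2 F(3) F(9) n2 by (simp add: nth_append)
      qed
    next
      case 3
      show ?thesis
      proof (cases "j+1 < ?n")
        case True
        then show ?thesis using 3 F(5)[OF True] by (simp add: nth_append)
      next
        case False
        then have jj: "j = ?n - 1" using 3 by simp
        then have "(xs!j, w) \<notin> A" using tour_basic(5)[OF T F(3)] F(9) by simp
        then show ?thesis using 3 jj n2 by (simp add: nth_append)
      qed
    next
      case 4
      then show ?thesis using tour_basic(4)[OF T] by (simp add: nth_append)
    qed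
  qed
  have "distinct (xs @ [w])" using D F(2) by simp
  then have "is_U_tournament (set (xs @ [w])) A" using Urel_U[OF Rw] by simp
  moreover have "dominates V A (set (xs @ [w]))"
    unfolding dominates_def
  proof (intro ballI)
    fix y z assume y: "y \<in> set (xs @ [w])" and z: "z \<in> V - set (xs @ [w])"
    then have zz: "z \<in> V - set xs" "z \<noteq> w" by auto
    show "(y, z) \<in> A"
    proof (cases "y = w")
      case True then show ?thesis using wdom zz by simp
    next
      case False
      then have "y \<in> set xs" using y by simp
      then obtain i where "i < ?n" "y = xs!i" by (auto simp: in_set_conv_nth)
      then show ?thesis using F(4) zz by simp
    qed
  qed
  ultimately show ?thesis by simp
qed

lemma case_two:
  assumes T: "tournament V A" and U: "U_property V A xs"
    and W: "{u\<in>V - set xs. (u, last xs)\<in>A} = {w}"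
    and I: "indeg V A w = indeg V A (last xs) + 1"
  shows "U_property V A (xs @ [w])"
proof -
  let ?n = "length xs"
  note F = W_facts[OF T U W]
  have n2: "?n \<ge> 2" using U_facts(1)[OF U] .
  show ?thesis unfolding U_property_def
  proof (intro conjI allI impI)
    show "2 \<le> length (xs @ [w])" using n2 by simp
    show "set (xs @ [w]) \<subseteq> V" using U_facts(2)[OF U] F(1) by simp
    have "0 < length xs" using n2 by linarith
    then have "(xs @ [w]) ! 0 = xs ! 0" by (simp add: nth_append)
    then show "indeg V A ((xs @ [w]) ! 0) = 1" using U_facts(3)[OF U] by simp
  next
    fix j assume j: "1 \<le> j \<and> j < length (xs @ [w])"
    show "((xs @ [w]) ! j, (xs @ [w]) ! (j - 1)) \<in> A"
    proof (cases "j < ?n")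
      case True
      have j1: "j - 1 < ?n" using True by linarith
      show ?thesis using U_facts(4)[OF U, of j] j True j1 by (simp add: nth_append)
    next
      case False
      then have "j = ?n" using j by simp
      then show ?thesis using F(3) F(9) n2 by (simp add: nth_append)
    qed
    show "indeg V A ((xs @ [w]) ! j) = j"
    proof (cases "j < ?n")
      case True then show ?thesis using U_facts(5)[OF U, of j] j by (simp add: nth_append)
    next
      case False
      then have "j = ?n" using j by simp
      then show ?thesis using I F(8) n2 by (simp add: nth_append)
    qed
  qed
qed

lemma case_three:
  assumes T: "tournament V A" and U: "U_property V A xs"
    and W: "{u\<in>V - set xs. (u, last xs)\<in>A} = {w}"
    and I: "indeg V A w > indeg V A (last xs) + 1"
  shows "is_U_tournament (set xs) A \<and> quasi_dominates_by V A (set xs) w (last xs)"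
proof -
  let ?n = "length xs"
  note F = W_facts[OF T U W]
  have n2: "?n \<ge> 2" using U_facts(1)[OF U] .
  have D: "distinct xs" using U_distinct[OF T U] .
  have "is_U_tournament (set xs) A" using Urel_U[OF U_Urel[OF T U] D] .
  moreover have "quasi_dominates_by V A (set xs) w (last xs)"
    unfolding quasi_dominates_by_def
  proof (intro conjI)
    show "(w, last xs) \<in> A" by (rule F(3))
    show "last xs \<in> set xs" using n2 by (metis last_in_set list.size(3) not_numeral_le_zero)
    show "w \<in> V" by (rule F(1))
    show "w \<notin> set xs" by (rule F(2))
    show "\<forall>(u, v)\<in>set xs \<times> (V - set xs) - {(last xs, w)}. (u, v) \<in> A"
    proof (intro ballI)
      fix p assume p: "p \<in> set xs \<times> (V - set xs) - {(last xs, w)}"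
      then obtain u v where uv: "p = (u,v)" "u \<in> set xs" "v \<in> V - set xs" "(u,v) \<noteq> (last xs, w)" by auto
      obtain i where i: "i < ?n" "u = xs!i" using uv(2) by (auto simp: in_set_conv_nth)
      have "(u, v) \<in> A"
      proof (cases "v = w")
        case True
        then have "i \<noteq> ?n - 1" using uv(4) i F(9) by auto
        then have "i+1 < ?n" using i by simp
        then show ?thesis using F(5) True i by simp
      next
        case False then show ?thesis using F(4) i uv by simp
      qed
      then show "case p of (u, v) \<Rightarrow> (u, v) \<in> A" using uv by simp
    qed
    show "card (set xs) + 1 \<le> indeg V A w" using I F(8) distinct_card[OF D] n2 by simp
    have "(xs!(?n-1), xs!(?n-1-1)) \<in> A" using U_facts(4)[OF U, of "?n-1"] n2 by simp
    moreover have "xs!(?n-1-1) \<in> set xs" using n2 by simp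
    ultimately show "\<exists>y\<in>set xs. (last xs, y) \<in> A" using F(9) by auto
  qed
  ultimately show ?thesis by simp
qed

lemma indeg_w_ge:
  assumes T: "tournament V A" and U: "U_property V A xs"
    and W: "{u\<in>V - set xs. (u, last xs)\<in>A} = {w}"
  shows "indeg V A w \<ge> indeg V A (last xs)"
proof -
  note F = W_facts[OF T U W]
  have fV: "finite V" using tour_basic(1)[OF T] .
  have "card ((\<lambda>j. xs!j) ` {..<length xs - 1}) \<le> card {u\<in>V. (u,w)\<in>A}"
    by (rule card_mono) (use fV F(6) in auto)
  then show ?thesis using F(7) F(8) unfolding indeg_def by simp
qed

lemma U_dom:
  assumes T: "tournament V A"
  shows "U_property V A xs \<Longrightarrow> \<exists>Y. set xs \<subseteq> Y \<and> Y \<subseteq> V \<and> is_U_tournament Y A \<and>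
           (dominates V A Y \<or> quasi_dominates V A Y)"
proof (induction "card (V - set xs)" arbitrary: xs rule: less_induct)
  case less
  note U = less.prems
  obtain w where W: "{u\<in>V - set xs. (u, last xs)\<in>A} = {w}" using U_w_exists[OF T U] by blast
  note F = W_facts[OF T U W]
  have XV: "set xs \<subseteq> V" using U_facts(2)[OF U] .
  have ge: "indeg V A w \<ge> indeg V A (last xs)" by (rule indeg_w_ge[OF T U W])
  consider "indeg V A w = indeg V A (last xs)" | "indeg V A w = indeg V A (last xs) + 1"
    | "indeg V A w > indeg V A (last xs) + 1" using ge by linarith
  then show ?case
  proof cases
    case 1
    then have "is_U_tournament (set (xs @ [w])) A \<and> dominates V A (set (xs @ [w]))"
      by (rule case_one[OF T U W])
    moreover have "set (xs @ [w]) \<subseteq> V" using XV F(1) by simp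
    ultimately show ?thesis by (intro exI[of _ "set (xs @ [w])"]) auto
  next
    case 2
    then have U2: "U_property V A (xs @ [w])" by (rule case_two[OF T U W])
    have fV: "finite V" using tour_basic(1)[OF T] .
    have "V - set (xs @ [w]) = (V - set xs) - {w}" by auto
    moreover have "w \<in> V - set xs" using F(1) F(2) by simp
    ultimately have "card (V - set (xs @ [w])) < card (V - set xs)"
      using fV by (metis card_Diff1_less finite_Diff)
    from less.hyps[OF this U2] obtain Y where
      "set (xs @ [w]) \<subseteq> Y \<and> Y \<subseteq> V \<and> is_U_tournament Y A \<and> (dominates V A Y \<or> quasi_dominates V A Y)"
      by blast
    then show ?thesis by (intro exI[of _ Y]) auto
  next
    case 3
    then have "is_U_tournament (set xs) A \<and> quasi_dominates_by V A (set xs) w (last xs)"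
      by (rule case_three[OF T U W])
    then show ?thesis using XV unfolding quasi_dominates_def by blast
  qed
qed

theorem mainTheorem18:
  assumes "tournament V A"
    and "U_property V A xs"
  shows "(\<exists>!w. w \<in> V - set xs \<and> (w, last xs) \<in> A) \<and>
    (\<forall>w. w \<in> V - set xs \<and> (w, last xs) \<in> A \<longrightarrow>
       (indeg V A w = indeg V A (last xs) \<longrightarrow>
          is_U_tournament (set (xs @ [w])) A \<and> dominates V A (set (xs @ [w]))) \<and>
       (indeg V A w = indeg V A (last xs) + 1 \<longrightarrow>
          (\<exists>Y. set (xs @ [w]) \<subseteq> Y \<and> Y \<subseteq> V \<and> is_U_tournament Y A \<and>
               (dominates V A Y \<or> quasi_dominates V A Y))) \<and>
       (indeg V A w > indeg V A (last xs) + 1 \<longrightarrow>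
          is_U_tournament (set xs) A \<and> quasi_dominates_by V A (set xs) w (last xs))) \<and>
    (\<exists>Y. set xs \<subseteq> Y \<and> Y \<subseteq> V \<and> is_U_tournament Y A \<and>
         (dominates V A Y \<or> quasi_dominates V A Y))"
proof -
  note T = assms(1) and U = assms(2)
  obtain w0 where W: "{u\<in>V - set xs. (u, last xs)\<in>A} = {w0}" using U_w_exists[OF T U] by blast
  have uniq: "\<And>w. w \<in> V - set xs \<and> (w, last xs) \<in> A \<longleftrightarrow> w = w0"
  proof -
    fix w
    have "w \<in> V - set xs \<and> (w, last xs) \<in> A \<longleftrightarrow> w \<in> {u\<in>V - set xs. (u, last xs)\<in>A}" by simp
    also have "\<dots> \<longleftrightarrow> w = w0" using W by simp
    finally show "w \<in> V - set xs \<and> (w, last xs) \<in> A \<longleftrightarrow> w = w0" .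
  qed
  have P1: "\<exists>!w. w \<in> V - set xs \<and> (w, last xs) \<in> A"
  proof (rule ex1I[of _ w0])
    show "w0 \<in> V - set xs \<and> (w0, last xs) \<in> A" using uniq[of w0] by simp
    show "\<And>w. w \<in> V - set xs \<and> (w, last xs) \<in> A \<Longrightarrow> w = w0" using uniq by blast
  qed
  have P2: "\<forall>w. w \<in> V - set xs \<and> (w, last xs) \<in> A \<longrightarrow>
       (indeg V A w = indeg V A (last xs) \<longrightarrow>
          is_U_tournament (set (xs @ [w])) A \<and> dominates V A (set (xs @ [w]))) \<and>
       (indeg V A w = indeg V A (last xs) + 1 \<longrightarrow>
          (\<exists>Y. set (xs @ [w]) \<subseteq> Y \<and> Y \<subseteq> V \<and> is_U_tournament Y A \<and>
               (dominates V A Y \<or> quasi_dominates V A Y))) \<and>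
       (indeg V A w > indeg V A (last xs) + 1 \<longrightarrow>
          is_U_tournament (set xs) A \<and> quasi_dominates_by V A (set xs) w (last xs))"
  proof (intro allI impI conjI)
    fix w assume "w \<in> V - set xs \<and> (w, last xs) \<in> A"
    then have ww: "w = w0" using uniq by blast
    then have Ww: "{u\<in>V - set xs. (u, last xs)\<in>A} = {w}" using W by simp
    show "is_U_tournament (set (xs @ [w])) A" if "indeg V A w = indeg V A (last xs)"
      using case_one[OF T U Ww that] by simp
    show "dominates V A (set (xs @ [w]))" if "indeg V A w = indeg V A (last xs)"
      using case_one[OF T U Ww that] by simp
    show "\<exists>Y. set (xs @ [w]) \<subseteq> Y \<and> Y \<subseteq> V \<and> is_U_tournament Y A \<and>
               (dominates V A Y \<or> quasi_dominates V A Y)" if "indeg V A w = indeg V A (last xs) + 1"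
      using U_dom[OF T case_two[OF T U Ww that]] .
    show "is_U_tournament (set xs) A" if "indeg V A w > indeg V A (last xs) + 1"
      using case_three[OF T U Ww that] by simp
    show "quasi_dominates_by V A (set xs) w (last xs)" if "indeg V A w > indeg V A (last xs) + 1"
      using case_three[OF T U Ww that] by simp
  qed
  show ?thesis using P1 P2 U_dom[OF T U] by blast
qed

end
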